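(* Let $G$ be a $3$-graph on $n$ vertices with $4 \mid n$ and $\delta(G) \ge 3n/4-1$. Let $(A,B)$ be a partition of $V(G)$ with $3n/16 < |A| < 5n/16$. Then $G$ contains a copy of $K^3_4$ with an odd number of vertices in both $A$ and $B$.
   Context: A $3$-graph is a set of $3$-element subsets (edges) of a vertex set; $\delta(G)$ is the largest $m$ such that every pair of vertices lies in at least $m$ edges. A copy of $K^3_4$ in $G$ is a $4$-set of vertices all of whose $3$-subsets are edges of $G$. *)

theory Defs
  imports Complex_Main
begin

definition is_3graph :: "'a set \<Rightarrow> 'a set set \<Rightarrow> bool" where
  "is_3graph V G \<longleftrightarrow> (\<forall>e\<in>G. e \<subseteq> V \<and> card e = 3)"

definition codeg :: "'a set set \<Rightarrow> 'a \<Rightarrow> 'a \<Rightarrow> nat" where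
  "codeg G x y = card {e\<in>G. x \<in> e \<and> y \<in> e}"

text \<open>delta(G) >= m: every pair of (distinct) vertices lies in at least m edges.\<close>
definition min_codeg_ge :: "'a set \<Rightarrow> 'a set set \<Rightarrow> real \<Rightarrow> bool" where
  "min_codeg_ge V G m \<longleftrightarrow> (\<forall>x\<in>V. \<forall>y\<in>V. x \<noteq> y \<longrightarrow> real (codeg G x y) \<ge> m)"

definition is_K4 :: "'a set set \<Rightarrow> 'a set \<Rightarrow> bool" where
  "is_K4 G S \<longleftrightarrow> card S = 4 \<and> (\<forall>T. T \<subseteq> S \<and> card T = 3 \<longrightarrow> T \<in> G)"

end

theory Submission
  imports Defs
begin

definition nb :: "'a set \<Rightarrow> 'a set set \<Rightarrow> 'a \<Rightarrow> 'a \<Rightarrow> 'a set" where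
  "nb V G x y = {z\<in>V. {x,y,z} \<in> G}"

lemma nb_sub:
  assumes "is_3graph V G"
  shows "nb V G x y \<subseteq> V - {x,y}"
proof
  fix z assume z: "z \<in> nb V G x y"
  then have "z \<in> V" and e: "{x,y,z} \<in> G" by (auto simp: nb_def)
  then have "card {x,y,z} = 3" using assms by (auto simp: is_3graph_def)
  then have "z \<noteq> x" "z \<noteq> y" by (auto simp: card_insert_if split: if_splits)
  with \<open>z \<in> V\<close> show "z \<in> V - {x,y}" by auto
qed

lemma codeg_le:
  assumes "is_3graph V G" "finite V" "x \<noteq> y"
  shows "codeg G x y \<le> card (nb V G x y)"
proof -
  have sub: "{e\<in>G. x \<in> e \<and> y \<in> e} \<subseteq> (\<lambda>z. {x,y,z}) ` nb V G x y"
  proof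
    fix e assume e: "e \<in> {e\<in>G. x \<in> e \<and> y \<in> e}"
    then have eG: "e \<in> G" "x \<in> e" "y \<in> e" by auto
    with assms have c3: "card e = 3" and eV: "e \<subseteq> V" by (auto simp: is_3graph_def)
    have fe: "finite e" using c3 by (metis card.infinite zero_neq_numeral)
    show "e \<in> (\<lambda>z. {x,y,z}) ` nb V G x y"
    proof -
      have "card (e - {x,y}) = 1" using c3 eG fe assms(3)
        by (simp add: card_Diff_subset)
      then obtain z where z: "e - {x,y} = {z}" by (meson card_1_singletonE)
      then have ee: "e = {x,y,z}" using eG by blast
      then have "z \<in> nb V G x y" using eV eG by (auto simp: nb_def)
      then show ?thesis using ee by blast
    qed
  qed
  have "finite (nb V G x y)" using assms by (simp add: nb_def)
  then have "card {e\<in>G. x \<in> e \<and> y \<in> e} \<le> card ((\<lambda>z. {x,y,z}) ` nb V G x y)"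
    using sub by (intro card_mono) auto
  also have "\<dots> \<le> card (nb V G x y)" by (rule card_image_le) fact
  finally show ?thesis by (simp add: codeg_def)
qed


lemma k4I:
  assumes d: "distinct [a,b,c,d]"
    and "{b,c,d} \<in> G" "{a,c,d} \<in> G" "{a,b,d} \<in> G" "{a,b,c} \<in> G"
  shows "is_K4 G {a,b,c,d}"
  unfolding is_K4_def
proof (intro conjI allI impI)
  show "card {a,b,c,d} = 4" using d by simp
  fix T assume T: "T \<subseteq> {a,b,c,d} \<and> card T = 3"
  have "\<exists>t\<in>{a,b,c,d}. t \<notin> T"
  proof (rule ccontr)
    assume "\<not> ?thesis"
    then have "{a,b,c,d} \<subseteq> T" by blast
    then have "T = {a,b,c,d}" using T by blast
    then show False using T d by simp
  qed
  then obtain t where t: "t \<in> {a,b,c,d}" "t \<notin> T" by blast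
  have sub: "T \<subseteq> {a,b,c,d} - {t}" using T t by blast
  have "card ({a,b,c,d} - {t}) = 3" using t d by (simp add: card_Diff_singleton)
  then have "T = {a,b,c,d} - {t}" using sub T by (intro card_subset_eq) auto
  then show "T \<in> G" using t d assms
    by (auto simp: insert_Diff_if insert_commute)
qed

lemma miss:
  assumes "is_3graph V G" "finite V" "card V = 4*m" "p \<in> V" "q \<in> V" "p \<noteq> q"
    and "3*m \<le> card (nb V G p q) + 1"
  shows "card (V - {p,q} - nb V G p q) + 1 \<le> m"
proof -
  have s: "nb V G p q \<subseteq> V - {p,q}" using nb_sub assms(1) .
  have "card (V - {p,q} - nb V G p q) = card (V - {p,q}) - card (nb V G p q)"
    using s assms(2) by (intro card_Diff_subset) (auto intro: finite_subset)
  moreover have "card (V - {p,q}) + 2 = 4*m"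
  proof -
    have "card {p,q} \<le> card V" using assms by (intro card_mono) auto
    then show ?thesis using assms by (simp add: card_Diff_subset)
  qed
  moreover have "card (nb V G p q) \<le> card (V - {p,q})" using s assms(2) by (intro card_mono) auto
  ultimately show ?thesis using assms(7) by linarith
qed

lemma abb:
  assumes g: "is_3graph V G" and fin: "finite V" and AB: "A \<union> B = V" "A \<inter> B = {}"
    and cV: "card V = 4*m"
    and deg: "\<forall>x\<in>V. \<forall>y\<in>V. x \<noteq> y \<longrightarrow> 3*m \<le> card (nb V G x y) + 1"
    and nok: "\<forall>S. is_K4 G S \<longrightarrow> \<not> (odd (card (S \<inter> A)) \<and> odd (card (S \<inter> B)))"
    and x: "x \<in> A" and u: "u \<in> B" and v: "v \<in> B" and uv: "u \<noteq> v"
    and xn: "x \<in> nb V G u v"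
  shows "card (A - nb V G u v) + m + 1 \<le> card A"
proof -
  have xV: "x \<in> V" and uV: "u \<in> V" and vV: "v \<in> V" using x u v AB by auto
  have xu: "x \<noteq> u" "x \<noteq> v" using x u v AB by auto
  have exuv: "{u,v,x} \<in> G" using xn by (simp add: nb_def)
  define U where "U = (V-{x,u}-nb V G x u) \<union> (V-{x,v}-nb V G x v) \<union> (V-{u,v}-nb V G u v)"
  have sub: "(B-{u,v}) \<union> (A - nb V G u v) \<subseteq> U"
  proof
    fix z assume z: "z \<in> (B-{u,v}) \<union> (A - nb V G u v)"
    show "z \<in> U"
    proof (cases "z \<in> A")
      case True
      then show ?thesis using z u v AB by (auto simp: U_def)
    next
      case False
      then have zB: "z \<in> B" "z \<noteq> u" "z \<noteq> v" "z \<noteq> x" using z x by auto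
      show ?thesis
      proof (rule ccontr)
        assume "z \<notin> U"
        then have "z \<in> nb V G x u" "z \<in> nb V G x v" "z \<in> nb V G u v"
          using zB AB by (auto simp: U_def)
        then have e: "{x,u,z} \<in> G" "{x,v,z} \<in> G" "{u,v,z} \<in> G" by (auto simp: nb_def)
        have e4: "{x,u,v} \<in> G" using exuv by (metis insert_commute)
        have K: "is_K4 G {x,u,v,z}"
          using e e4 zB xu uv by (intro k4I) auto
        have "{x,u,v,z} \<inter> A = {x}" using x u v zB AB by auto
        moreover have "{x,u,v,z} \<inter> B = {u,v,z}" using x u v zB AB by auto
        ultimately show False using nok K zB uv by auto
      qed
    qed
  qed
  have fA: "finite A" "finite B" using fin AB by (auto intro: finite_subset)
  have "card ((B-{u,v}) \<union> (A - nb V G u v)) = card (B-{u,v}) + card (A - nb V G u v)"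
    using fA AB by (intro card_Un_disjoint) auto
  moreover have "card (B - {u,v}) + 2 = card B"
  proof -
    have "card {u,v} \<le> card B" using u v fA by (intro card_mono) auto
    then show ?thesis using u v uv fA by (simp add: card_Diff_subset)
  qed
  moreover have "card ((B-{u,v}) \<union> (A - nb V G u v)) \<le> card U"
    using sub fin by (intro card_mono) (auto simp: U_def)
  moreover have "card U \<le> card (V-{x,u}-nb V G x u) + card (V-{x,v}-nb V G x v) + card (V-{u,v}-nb V G u v)"
    unfolding U_def by (meson card_Un_le add_le_mono order_trans le_refl)
  moreover have "card (V-{x,u}-nb V G x u) + 1 \<le> m"
    using deg xV uV xu by (intro miss[OF g fin cV]) auto
  moreover have "card (V-{x,v}-nb V G x v) + 1 \<le> m"
    using deg xV vV xu by (intro miss[OF g fin cV]) auto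
  moreover have "card (V-{u,v}-nb V G u v) + 1 \<le> m"
    using deg uV vV uv by (intro miss[OF g fin cV]) auto
  moreover have "card A + card B = 4*m" using cV AB fA by (metis card_Un_disjoint)
  ultimately show ?thesis by linarith
qed


lemma two_elems:
  assumes "finite B" "card B \<ge> 2"
  obtains u v where "u \<in> B" "v \<in> B" "u \<noteq> v"
proof -
  obtain u where u: "u \<in> B" using assms by (metis card.empty ex_in_conv not_numeral_le_zero)
  have "card (B - {u}) \<ge> 1" using assms u by (simp add: card_Diff_singleton)
  then obtain v where "v \<in> B - {u}" by (metis card.empty ex_in_conv not_one_le_zero)
  then show ?thesis using u that by blast
qed

theorem lemma8p10:
  fixes V :: "'a set" and G :: "'a set set" and A B :: "'a set"
  assumes "finite V"
    and "is_3graph V G"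
    and "4 dvd card V"
    and "min_codeg_ge V G (3 * real (card V) / 4 - 1)"
    and "A \<union> B = V" and "A \<inter> B = {}"
    and "3 * real (card V) / 16 < real (card A)"
    and "real (card A) < 5 * real (card V) / 16"
  shows "\<exists>S. is_K4 G S \<and> odd (card (S \<inter> A)) \<and> odd (card (S \<inter> B))"
proof (rule ccontr)
  assume "\<not> ?thesis"
  then have nok: "\<forall>S. is_K4 G S \<longrightarrow> \<not> (odd (card (S \<inter> A)) \<and> odd (card (S \<inter> B)))" by blast
  note fin = assms(1) and g = assms(2) and AB = assms(5,6)
  obtain m where cV: "card V = 4*m" using assms(3) by blast
  have deg: "\<forall>x\<in>V. \<forall>y\<in>V. x \<noteq> y \<longrightarrow> 3*m \<le> card (nb V G x y) + 1"
  proof (intro ballI impI)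
    fix x y assume xy: "x \<in> V" "y \<in> V" "x \<noteq> y"
    have "real (codeg G x y) \<ge> 3 * real (card V) / 4 - 1"
      using assms(4) xy by (auto simp: min_codeg_ge_def)
    then have "real (codeg G x y) \<ge> 3 * real m - 1" using cV by simp
    then have "3*m \<le> codeg G x y + 1" by linarith
    moreover have "codeg G x y \<le> card (nb V G x y)" using codeg_le[OF g fin xy(3)] .
    ultimately show "3*m \<le> card (nb V G x y) + 1" by linarith
  qed
  have fA: "finite A" "finite B" using fin AB by (auto intro: finite_subset)
  have ab: "card A + card B = 4*m" using cV AB fA by (metis card_Un_disjoint)
  have aL: "3 * real m < 4 * real (card A)" and aU: "4 * real (card A) < 5 * real m"
    using assms(7,8) cV by auto
  have m1: "m \<ge> 1" using aL aU by linarith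
  have abb': "\<And>x u v. x \<in> A \<Longrightarrow> u \<in> B \<Longrightarrow> v \<in> B \<Longrightarrow> u \<noteq> v \<Longrightarrow> x \<in> nb V G u v
     \<Longrightarrow> card (A - nb V G u v) + m + 1 \<le> card A"
    using abb[OF g fin AB cV deg nok] by blast
  have nbs: "\<And>x y. nb V G x y \<subseteq> V - {x,y}" using nb_sub[OF g] by blast
  have fnb: "\<And>x y. finite (nb V G x y)" using fin by (simp add: nb_def)
  show False
  proof (cases "card A \<le> m")
    case True
    have "card A \<noteq> 0" using aL by auto
    then obtain x where x: "x \<in> A" using fA by (metis card.empty ex_in_conv)
    have "card B \<noteq> 0" using ab True m1 by linarith
    then obtain u where u: "u \<in> B" using fA by (metis card.empty ex_in_conv)
    have xu: "x \<in> V" "u \<in> V" "x \<noteq> u" using x u AB by auto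
    have "nb V G x u \<inter> B \<noteq> {}"
    proof
      assume "nb V G x u \<inter> B = {}"
      then have "nb V G x u \<subseteq> A" using nbs[of x u] AB by blast
      then have "card (nb V G x u) \<le> card A" using fA by (intro card_mono) auto
      then show False using deg xu True m1 by fastforce
    qed
    then obtain v where v: "v \<in> nb V G x u" "v \<in> B" by blast
    have "v \<noteq> u" using v nbs[of x u] by blast
    have "x \<in> nb V G u v" using v x AB by (auto simp: nb_def insert_commute)
    then have "card (A - nb V G u v) + m + 1 \<le> card A"
      using abb'[OF x u v(2)] \<open>v \<noteq> u\<close> by auto
    then show False using True by linarith
  next
    case False
    have exA: "\<And>p q. p \<in> B \<Longrightarrow> q \<in> B \<Longrightarrow> p \<noteq> q \<Longrightarrow> \<exists>x\<in>A. x \<in> nb V G p q"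
    proof (rule ccontr)
      fix p q assume pq: "p \<in> B" "q \<in> B" "p \<noteq> q" and n: "\<not> (\<exists>x\<in>A. x \<in> nb V G p q)"
      then have "nb V G p q \<subseteq> B - {p,q}" using nbs[of p q] AB by blast
      then have "card (nb V G p q) \<le> card (B - {p,q})" using fA by (intro card_mono) auto
      moreover have "card (B - {p,q}) + 2 = card B"
      proof -
        have "card {p,q} \<le> card B" using pq fA by (intro card_mono) auto
        then show ?thesis using pq fA by (simp add: card_Diff_subset)
      qed
      moreover have "3*m \<le> card (nb V G p q) + 1" using deg pq AB by blast
      ultimately show False using ab False by linarith
    qed
    have "card B \<ge> 2" using ab aU m1 by linarith
    then obtain u v where uv: "u \<in> B" "v \<in> B" "u \<noteq> v" using two_elems fA by blast
    have "nb V G u v \<inter> B \<noteq> {}"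
    proof
      assume "nb V G u v \<inter> B = {}"
      then have "nb V G u v \<subseteq> A" using nbs[of u v] AB by blast
      then have "card (nb V G u v) \<le> card A" using fA by (intro card_mono) auto
      moreover have "3*m \<le> card (nb V G u v) + 1" using deg uv AB by blast
      ultimately show False using aU m1 by linarith
    qed
    then obtain w where w: "w \<in> nb V G u v" "w \<in> B" by blast
    have wuv: "w \<noteq> u" "w \<noteq> v" using w nbs[of u v] by auto
    have euvw: "{u,v,w} \<in> G" using w by (simp add: nb_def)
    obtain x1 where "x1 \<in> A" "x1 \<in> nb V G u v" using exA uv by blast
    then have c1: "card (A - nb V G u v) + m + 1 \<le> card A" using abb' uv by blast
    obtain x2 where "x2 \<in> A" "x2 \<in> nb V G u w" using exA uv w wuv by metis
    then have c2: "card (A - nb V G u w) + m + 1 \<le> card A" using abb' uv w wuv by metis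
    obtain x3 where "x3 \<in> A" "x3 \<in> nb V G v w" using exA uv w wuv by metis
    then have c3: "card (A - nb V G v w) + m + 1 \<le> card A" using abb' uv w wuv by metis
    have cov: "A \<subseteq> (A - nb V G u v) \<union> (A - nb V G u w) \<union> (A - nb V G v w)"
    proof
      fix z assume z: "z \<in> A"
      show "z \<in> (A - nb V G u v) \<union> (A - nb V G u w) \<union> (A - nb V G v w)"
      proof (rule ccontr)
        assume "\<not> ?thesis"
        then have "z \<in> nb V G u v" "z \<in> nb V G u w" "z \<in> nb V G v w" using z by auto
        then have e: "{u,v,z} \<in> G" "{u,w,z} \<in> G" "{v,w,z} \<in> G" by (auto simp: nb_def)
        have zd: "z \<noteq> u" "z \<noteq> v" "z \<noteq> w" using z uv w AB by auto
        have t1: "{z,v,w} = {v,w,z}" "{z,u,w} = {u,w,z}" "{z,u,v} = {u,v,z}" by auto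
        have K: "is_K4 G {z,u,v,w}"
          apply (rule k4I)
          using zd uv wuv apply simp
          using euvw e t1 by simp_all
        have "{z,u,v,w} \<inter> A = {z}" using z uv w AB by auto
        moreover have "{z,u,v,w} \<inter> B = {u,v,w}" using z uv w AB by auto
        ultimately show False using nok K uv wuv by auto
      qed
    qed
    have "card A \<le> card ((A - nb V G u v) \<union> (A - nb V G u w) \<union> (A - nb V G v w))"
      using cov fA by (intro card_mono) auto
    also have "\<dots> \<le> card (A - nb V G u v) + card (A - nb V G u w) + card (A - nb V G v w)"
      by (meson card_Un_le add_le_mono order_trans le_refl)
    finally have "card A \<le> card (A - nb V G u v) + card (A - nb V G u w) + card (A - nb V G v w)" .
    then have "3*m + 3 \<le> 2 * card A" using c1 c2 c3 by linarith
    then have "3 * real m + 3 \<le> 2 * real (card A)" by linarith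
    then show False using aU by linarith
  qed
qed

end
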